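(* Let $v_0=(q^c-1)(q^b+q^{b-1}-1)$. For all integers $v\ge v_0$ and $s,t\ge0$, $$\#\Omega_{v,0,s,t}=1-g+v+q^{b-1}s+(q-1)t.$$
   Context: $q$ is a power of a prime $p$, $b\ge1$ an integer, $a=b+1$, $c=a+b$, $N_k=(q^k-1)/(q-1)$, and $g=\frac12\big((q^c-2)(q^{a-1}+q^{b-1}-2)+(q^c-q)\big)$. For integers $v,r,s,t$: $\Omega_{v,r,s,t}=\{(i,j,k)\in\mathbb{Z}^3:\ -v\le i,\ -r\le i+(q^c-1)k<-r+(q^c-1),\ -s\le -q^ai+(q^c-1)j<(q^c-1)-s,\ -t\le q^{a-1}N_bi-q^{b-1}N_cj-(q^{a-1}-1)N_ck\}$. *)

theory Defs
  imports "HOL-Computational_Algebra.Primes"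
begin

definition prime_power :: "nat \<Rightarrow> bool" where
  "prime_power q \<longleftrightarrow> (\<exists>p k. prime p \<and> k \<ge> 1 \<and> q = p ^ k)"

text \<open>N_k = (q^k - 1)/(q - 1), an exact integer division for q \<ge> 2.\<close>
definition NN :: "int \<Rightarrow> nat \<Rightarrow> int" where
  "NN q k = (q ^ k - 1) div (q - 1)"

text \<open>The genus g, with a = b+1, c = a+b; the numerator is always even.\<close>
definition genus :: "int \<Rightarrow> nat \<Rightarrow> int" where
  "genus q b = (let a = b + 1; c = a + b in
     ((q ^ c - 2) * (q ^ (a - 1) + q ^ (b - 1) - 2) + (q ^ c - q)) div 2)"

definition Omega :: "int \<Rightarrow> nat \<Rightarrow> int \<Rightarrow> int \<Rightarrow> int \<Rightarrow> int \<Rightarrow> (int \<times> int \<times> int) set" where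
  "Omega q b v r s t = (let a = b + 1; c = a + b in
     {(i, j, k). -v \<le> i \<and>
        -r \<le> i + (q ^ c - 1) * k \<and> i + (q ^ c - 1) * k < -r + (q ^ c - 1) \<and>
        -s \<le> - (q ^ a) * i + (q ^ c - 1) * j \<and> - (q ^ a) * i + (q ^ c - 1) * j < (q ^ c - 1) - s \<and>
        -t \<le> q ^ (a - 1) * NN q b * i - q ^ (b - 1) * NN q c * j - (q ^ (a - 1) - 1) * NN q c * k})"

end

theory Submission
  imports Defs
begin

lemma NN_mult: assumes "(q::int) \<ge> 2" shows "NN q k * (q - 1) = q ^ k - 1"
proof -
  have "q ^ k - 1 = (q - 1) * (\<Sum>i<k. q ^ i)" by (rule power_diff_1_eq)
  then show ?thesis using assms unfolding NN_def by simp
qed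

lemma gauss_int: assumes "(n::int) \<ge> 0" shows "2 * (\<Sum>w\<in>{0..<n}. w) = n * (n - 1)"
proof -
  have "2 * (\<Sum>w\<in>{0..<int k}. w) = int k * (int k - 1)" for k
  proof (induction k)
    case 0 then show ?case by simp
  next
    case (Suc k)
    have "{0..<int (Suc k)} = insert (int k) {0..<int k}" by auto
    then show ?case using Suc by (simp add: algebra_simps)
  qed
  from this[of "nat n"] assms show ?thesis by simp
qed

lemma perm_sum: assumes "(n::int) > 0" "coprime A n"
  shows "(\<Sum>w\<in>{0..<n}. (A*w+t) mod n) = (\<Sum>w\<in>{0..<n}. w)"
proof -
  define p where "p = (\<lambda>w. (A*w+t) mod n)"
  have inj: "inj_on p {0..<n}"
  proof (rule inj_onI)
    fix x y assume x: "x \<in> {0..<n}" and y: "y \<in> {0..<n}" and e: "p x = p y"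
    have "n dvd (A*x+t) - (A*y+t)" using e unfolding p_def by (simp add: mod_eq_dvd_iff)
    then have "n dvd A*(x-y)" by (simp add: algebra_simps)
    then have d: "n dvd x-y" using assms(2) by (simp add: coprime_commute coprime_dvd_mult_right_iff)
    show "x = y"
    proof (rule ccontr)
      assume "x \<noteq> y"
      then have "\<bar>x-y\<bar> > 0" by simp
      moreover have "\<bar>x-y\<bar> < n" using x y by auto
      ultimately show False using d by (meson dvd_imp_le_int not_le abs_dvd_iff less_imp_neq dvd_abs_iff zdvd_imp_le) 
    qed
  qed
  have sub: "p ` {0..<n} \<subseteq> {0..<n}" using assms(1) by (auto simp: p_def)
  have eq: "p ` {0..<n} = {0..<n}"
    by (rule card_subset_eq) (use sub inj in \<open>auto simp: card_image[OF inj]\<close>)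
  have "(\<Sum>w\<in>{0..<n}. w) = (\<Sum>w\<in>p ` {0..<n}. w)" using eq by simp
  also have "\<dots> = (\<Sum>w\<in>{0..<n}. p w)" using inj by (simp add: sum.reindex)
  finally show ?thesis by (simp add: p_def)
qed

lemma periodic_sum: assumes "(n::int) > 0"
  shows "(\<Sum>r\<in>{0..<int k * n}. F (r mod n)) = int k * (\<Sum>w\<in>{0..<n}. (F w :: int))"
proof (induction k)
  case 0 then show ?case by simp
next
  case (Suc k)
  have un: "{0..<int (Suc k) * n} = {0..<int k * n} \<union> {int k * n..<int k * n + n}"
    proof -
    have nn: "0 \<le> n * int k" using assms by simp
    show ?thesis using nn assms unfolding set_eq_iff atLeastLessThan_iff Un_iff by (intro allI; simp add: algebra_simps; linarith)
  qed
  have "(\<Sum>r\<in>{int k * n..<int k * n + n}. F (r mod n)) = (\<Sum>w\<in>{0..<n}. F w)"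
  proof -
    have im: "{int k * n..<int k * n + n} = (\<lambda>w. w + int k * n) ` {0..<n}"
      by (simp add: image_add_atLeastLessThan' add.commute)
    have "(\<Sum>r\<in>{int k * n..<int k * n + n}. F (r mod n)) = (\<Sum>w\<in>{0..<n}. F ((w + int k * n) mod n))"
      unfolding im by (subst sum.reindex) (auto simp: inj_on_def)
    also have "\<dots> = (\<Sum>w\<in>{0..<n}. F w)"
      by (rule sum.cong) auto
    finally show ?thesis .
  qed
  moreover have "(\<Sum>r\<in>{0..<int (Suc k) * n}. F (r mod n)) = (\<Sum>r\<in>{0..<int k * n}. F (r mod n)) + (\<Sum>r\<in>{int k * n..<int k * n + n}. F (r mod n))"
    unfolding un by (rule sum.union_disjoint) auto
  ultimately show ?case using Suc by (simp add: algebra_simps)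
qed

lemma hermite: assumes "(M::int) > 0" shows "(\<Sum>r\<in>{0..<M}. (v+r) div M) = v"
proof -
  define d e where "d = v div M" and "e = v mod M"
  have v: "v = M*d + e" and e: "0 \<le> e" "e < M" using assms by (auto simp: d_def e_def)
  have "(\<Sum>r\<in>{0..<M}. (v+r) div M) = (\<Sum>r\<in>{0..<M}. d + (if M - e \<le> r then 1 else 0))"
  proof (rule sum.cong)
    fix r assume r: "r \<in> {0..<M}"
    have "(v+r) div M = d + (e + r) div M" unfolding v using assms
      by (simp add: add.assoc)
    moreover have "(e+r) div M = (if M - e \<le> r then 1 else 0)"
    proof (cases "M - e \<le> r")
      case True
      then have "(e+r) div M = ((e + r - M) + M*1) div M" by simp
      also have "\<dots> = 1" using True r e assms by (subst div_mult_self2) auto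
      finally show ?thesis using True by simp
    next
      case False then show ?thesis using r e by simp
    qed
    ultimately show "(v+r) div M = d + (if M - e \<le> r then 1 else 0)" by simp
  qed simp
  also have "\<dots> = M*d + (\<Sum>r\<in>{0..<M}. (if M - e \<le> r then 1 else 0))"
    using assms by (simp add: sum.distrib)
  also have "(\<Sum>r\<in>{0..<M}. (if M - e \<le> r then 1 else 0)) = (\<Sum>r\<in>{r\<in>{0..<M}. M - e \<le> r}. (1::int))"
    by (subst sum.inter_filter) auto
  also have "{r\<in>{0..<M}. M - e \<le> r} = {M-e..<M}" using e by auto
  finally show ?thesis using e v by simp
qed

lemma coprime_lin: assumes "a*u + b*w = (1::int)" shows "coprime a b"
proof (rule coprimeI)
  fix c assume "c dvd a" "c dvd b"
  then have "c dvd a*u + b*w" by simp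
  then show "is_unit c" using assms by simp
qed

lemma count_core:
  fixes Q X Y M n Nb v s t :: int
  assumes Q: "Q \<ge> 2" and XY: "X = Q*Y" and Y: "Y \<ge> 1" and MX: "M = Q*X^2 - 1"
    and nM: "n*(Q-1) = M" and Nb: "Nb*(Q-1) = X - 1" and v: "v \<ge> M*(X+Y-1)"
    and s: "s \<ge> 0" and t: "t \<ge> 0"
  shows "2*(1 + v + Y*s + (Q-1)*t - int (card {(i,j,k). -v \<le> i \<and> 0 \<le> i + M*k \<and> i + M*k < M \<and>
            -s \<le> -(Q*X)*i + M*j \<and> -(Q*X)*i + M*j < M - s \<and>
            -t \<le> X*Nb*i - Y*n*j - (X-1)*n*k}))
         = (Q*X^2 - 2)*(X+Y-2) + (Q*X^2 - Q)"
proof -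
  define Om where "Om = {(i,j,k). -v \<le> i \<and> 0 \<le> i + M*k \<and> i + M*k < M \<and>
            -s \<le> -(Q*X)*i + M*j \<and> -(Q*X)*i + M*j < M - s \<and>
            -t \<le> X*Nb*i - Y*n*j - (X-1)*n*k}"
  have X1: "X \<ge> 2" using XY Q Y by (metis mult_mono mult.right_neutral order_trans[of 2 "Q*1"] zero_le_numeral order.trans[of 0 2 Q] zero_le_one)
  have Xp: "X^2 \<ge> 4" using X1 power_mono[of 2 X 2] by simp
  have "Q*X^2 \<ge> 2*4" using Q Xp by (intro mult_mono) auto
  then have M0: "M > 0" using MX by simp
  have n0: "n > 0" using nM M0 Q by (smt (verit) mult_nonpos_nonneg)
  define J where "J r = -((s - Q*X*r) div M)" for r
  define h where "h r = X*Nb*r - Y*n*J r" for r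
  define L where "L r = -((v+r) div M)" for r
  define U where "U r = (h r + t) div n" for r
  define Sig where "Sig = (SIGMA r:{0..<M}. {L r..U r})"
  define psi where "psi = (\<lambda>(r,m). (M*m + r, Q*X*m + J r, -m))"
  have coef: "X*Nb*M - Y*n*Q*X + (X-1)*n = -n"
  proof -
    have "(Q-1)*(X*Nb*M - Y*n*Q*X + (X-1)*n) = (Q-1)*(-n)"
    proof -
      have "(Q-1)*(X*Nb*M - Y*n*Q*X + (X-1)*n) = X*(Nb*(Q-1))*M - Y*Q*X*(n*(Q-1)) + (X-1)*(n*(Q-1))"
        by (simp add: algebra_simps)
      also have "\<dots> = X*(X-1)*M - (Y*Q*X)*M + (X-1)*M" by (simp only: Nb nM)
      also have "Y*Q*X = X*X" using XY by simp
      also have "X*(X-1)*M - (X*X)*M + (X-1)*M = -M" by (simp add: algebra_simps)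
      finally have f: "(Q-1)*(X*Nb*M - Y*n*Q*X + (X-1)*n) = -M" .
      have "(Q-1)*(-n) = -(n*(Q-1))" by (simp add: mult.commute)
      then show ?thesis using f nM by simp
    qed
    moreover have "Q - 1 \<noteq> 0" using Q by simp
    ultimately show ?thesis by (metis mult_left_cancel)
  qed
  have Jprop: "-s \<le> M*J r - Q*X*r \<and> M*J r - Q*X*r < M - s" for r
  proof -
    have "M*J r = Q*X*r - s + (s - Q*X*r) mod M"
      unfolding J_def using div_mult_mod_eq[of "s - Q*X*r" M] by (simp add: algebra_simps)
    moreover have "0 \<le> (s - Q*X*r) mod M" "(s - Q*X*r) mod M < M" using M0 by auto
    ultimately show ?thesis by simp
  qed
  have fid: "X*Nb*(M*m+r) - Y*n*(Q*X*m + J r) - (X-1)*n*(-m) = -n*m + h r" for m r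
  proof -
    have "X*Nb*(M*m+r) - Y*n*(Q*X*m + J r) - (X-1)*n*(-m) = m*(X*Nb*M - Y*n*Q*X + (X-1)*n) + h r"
      unfolding h_def by (simp add: algebra_simps)
    then show ?thesis using coef by simp
  qed
  have OmEq: "Om = psi ` Sig"
  proof
    show "psi ` Sig \<subseteq> Om"
    proof
      fix x assume "x \<in> psi ` Sig"
      then obtain r m where rm: "r \<in> {0..<M}" "m \<in> {L r..U r}" and x: "x = psi (r,m)"
        unfolding Sig_def by auto
      have a1: "-v \<le> M*m + r"
      proof -
        have "M*((v+r) div M) \<le> v + r" using M0
          by (metis div_mult_mod_eq le_add_same_cancel1 mod_int_pos_iff mult.commute)
        moreover have "M*(-((v+r) div M)) \<le> M*m" using rm M0 unfolding L_def by (intro mult_left_mono) auto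
        ultimately show ?thesis by simp
      qed
      have a2: "-t \<le> -n*m + h r"
      proof -
        have "n*((h r + t) div n) \<le> h r + t" using n0
          by (metis div_mult_mod_eq le_add_same_cancel1 mod_int_pos_iff mult.commute)
        moreover have "n*m \<le> n*((h r + t) div n)" using rm n0 unfolding U_def by (intro mult_left_mono) auto
        ultimately show ?thesis by simp
      qed
      show "x \<in> Om" unfolding Om_def x psi_def using a1 a2 rm Jprop[of r] fid[of m r]
        by (simp add: algebra_simps)
    qed
  next
    show "Om \<subseteq> psi ` Sig"
    proof
      fix x assume xO: "x \<in> Om"
      then obtain i j k where x: "x = (i,j,k)" by (cases x) auto
      define r m where "r = i mod M" and "m = i div M"
      have i: "i = M*m + r" unfolding r_def m_def by simp
      have r: "r \<in> {0..<M}" unfolding r_def using M0 by simp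
      from xO have c: "-v \<le> i" "0 \<le> i + M*k" "i + M*k < M" "-s \<le> -(Q*X)*i + M*j"
        "-(Q*X)*i + M*j < M - s" "-t \<le> X*Nb*i - Y*n*j - (X-1)*n*k"
        unfolding Om_def x by auto
      have k: "k = -m"
      proof -
        have "(i + M*k) div M = 0" using c by simp
        moreover have "(i + M*k) div M = m + k" unfolding m_def using M0 by simp
        ultimately show ?thesis by simp
      qed
      have j: "j = Q*X*m + J r"
      proof -
        have e: "-(Q*X)*i + M*j + s = (s - Q*X*r) + M*(j - Q*X*m)" unfolding i by (simp add: algebra_simps)
        have "(-(Q*X)*i + M*j + s) div M = 0" using c by simp
        then have "((s - Q*X*r) + M*(j - Q*X*m)) div M = 0" using e by (simp add: algebra_simps)
        then have "(s - Q*X*r) div M + (j - Q*X*m) = 0" using M0 by simp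
        then show ?thesis unfolding J_def by simp
      qed
      have mL: "L r \<le> m"
      proof -
        have "M*(-m) \<le> v + r" using c(1) i by simp
        then have "(M*(-m)) div M \<le> (v + r) div M" using M0 by (intro zdiv_mono1) auto
        moreover have "(M*(-m)) div M = -m" using M0 by (metis nonzero_mult_div_cancel_left less_irrefl)
        ultimately show ?thesis unfolding L_def by linarith
      qed
      have mU: "m \<le> U r"
      proof -
        have "-t \<le> -n*m + h r" using c(6) fid[of m r] unfolding i j k by simp
        then have "n*m \<le> h r + t" by simp
        then have "(n*m) div n \<le> (h r + t) div n" using n0 by (intro zdiv_mono1) auto
        moreover have "(n*m) div n = m" using n0 by (metis nonzero_mult_div_cancel_left less_irrefl)
        ultimately show ?thesis unfolding U_def by linarith
      qed
      have "x = psi (r,m)" unfolding x psi_def using i j k by simp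
      then show "x \<in> psi ` Sig" unfolding Sig_def using r mL mU by auto
    qed
  qed
  have inj: "inj_on psi Sig"
  proof (rule inj_onI)
    fix p1 p2 assume p1: "p1 \<in> Sig" and p2: "p2 \<in> Sig" and e: "psi p1 = psi p2"
    obtain r1 m1 r2 m2 where pp: "p1 = (r1,m1)" "p2 = (r2,m2)" by (cases p1, cases p2) auto
    from e have "m1 = m2" unfolding pp psi_def by simp
    moreover then have "r1 = r2" using e unfolding pp psi_def by simp
    ultimately show "p1 = p2" using pp by simp
  qed
  have nonneg: "U r - L r + 1 \<ge> 0" if r: "r \<in> {0..<M}" for r
  proof -
    have MJ: "M * J r < Q*X*r + M" using Jprop[of r] s by simp
    have "(Q-1)*h r = X*(Nb*(Q-1))*r - Y*((n*(Q-1))*J r)"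
      unfolding h_def by (simp add: algebra_simps)
    then have hq: "(Q-1)*h r = X*(X-1)*r - Y*(M*J r)" by (simp only: Nb nM)
    have "Y*(M*J r) \<le> Y*(Q*X*r + M)" using MJ Y by (simp add: mult_left_mono)
    moreover have "Y*(Q*X*r + M) = X*X*r + Y*M" using XY by (simp add: algebra_simps)
    moreover have "X*(X-1)*r = X*X*r - X*r" by (simp add: algebra_simps)
    ultimately have "(Q-1)*h r \<ge> -X*r - Y*M" using hq by linarith
    moreover have "X*r - r \<le> X*M - M"
    proof -
      have "(X-1)*r \<le> (X-1)*M" using r X1 by (intro mult_left_mono) auto
      then show ?thesis by (simp add: algebra_simps)
    qed
    moreover have "M*(X+Y-1) = X*M + Y*M - M" by (simp add: algebra_simps)
    ultimately have H1: "(Q-1)*h r \<ge> -v - r" using v by linarith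
    have "h r + t = n*U r + (h r + t) mod n" unfolding U_def
      using div_mult_mod_eq[of "h r + t" n] by (simp add: mult.commute)
    moreover have "(h r + t) mod n < n" using n0 by simp
    ultimately have H2: "h r + t < n*(U r + 1)" by (simp add: distrib_left)
    have "v + r = M*((v+r) div M) + (v + r) mod M"
      using div_mult_mod_eq[of "v + r" M] by (simp add: mult.commute)
    moreover have "(v + r) mod M < M" using M0 by simp
    ultimately have H3: "v + r < M*((v+r) div M + 1)" unfolding distrib_left mult_1_right by linarith
    have "(Q-1)*(h r + t) < (Q-1)*(n*(U r + 1))" using H2 Q by (intro mult_strict_left_mono) auto
    also have "(Q-1)*(n*(U r + 1)) = M*(U r + 1)" using nM by (simp add: mult.commute mult.left_commute)
    finally have H4: "(Q-1)*(h r + t) < M*(U r + 1)" .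
    have "(Q-1)*t \<ge> 0" using Q t by simp
    then have "M*(U r + 1) > -v - r" using H1 H4 by (simp add: distrib_left)
    moreover have "M*(L r - 1) = -(M*((v+r) div M + 1))" unfolding L_def by (simp add: algebra_simps)
    ultimately have "M*(U r + 1) > M*(L r - 1)" using H3 by linarith
    then have "U r + 1 > L r - 1" using M0 by (simp add: mult_less_cancel_left)
    then show ?thesis by simp
  qed
  have cardOm: "int (card Om) = (\<Sum>r\<in>{0..<M}. U r) + v + M"
  proof -
    have "card Om = card Sig" unfolding OmEq using inj by (simp add: card_image)
    also have "\<dots> = (\<Sum>r\<in>{0..<M}. card {L r..U r})" unfolding Sig_def by (simp add: card_SigmaI)
    finally have "int (card Om) = (\<Sum>r\<in>{0..<M}. int (nat (U r - L r + 1)))" by simp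
    also have "\<dots> = (\<Sum>r\<in>{0..<M}. U r + (v+r) div M + 1)"
      by (rule sum.cong) (use nonneg in \<open>auto simp: L_def\<close>)
    also have "\<dots> = (\<Sum>r\<in>{0..<M}. U r) + (\<Sum>r\<in>{0..<M}. (v+r) div M) + M"
      using M0 by (simp add: sum.distrib)
    finally show ?thesis using hermite[OF M0] by simp
  qed
  define R where "R = (\<Sum>r\<in>{0..<M}. r)"
  define SJ where "SJ = (\<Sum>r\<in>{0..<M}. J r)"
  define S1 where "S1 = (\<Sum>r\<in>{0..<M}. U r)"
  define Rn where "Rn = (\<Sum>w\<in>{0..<n}. w)"
  have ER: "2*R = M*(M-1)" unfolding R_def using gauss_int M0 by simp
  have ERn: "2*Rn = n*(n-1)" unfolding Rn_def using gauss_int n0 by simp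
  have cop1: "coprime (-(Q*X)) M"
    by (rule coprime_lin[of _ "-X" _ "-1"]) (simp add: MX power2_eq_square algebra_simps)
  have EJ: "M*SJ = Q*X*R - M*s + R"
  proof -
    have "M*SJ = (\<Sum>r\<in>{0..<M}. Q*X*r - s + ((-(Q*X))*r + s) mod M)"
      unfolding SJ_def sum_distrib_left
    proof (rule sum.cong)
      fix r show "M*J r = Q*X*r - s + ((-(Q*X))*r + s) mod M"
        unfolding J_def using div_mult_mod_eq[of "s - Q*X*r" M] by (simp add: algebra_simps)
    qed simp
    also have "\<dots> = Q*X*R - M*s + (\<Sum>r\<in>{0..<M}. ((-(Q*X))*r + s) mod M)"
      using M0 by (simp add: sum.distrib sum_subtractf R_def sum_distrib_left)
    also have "(\<Sum>r\<in>{0..<M}. ((-(Q*X))*r + s) mod M) = R"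
      unfolding R_def by (rule perm_sum[OF M0 cop1])
    finally show ?thesis .
  qed
  have nform: "n = Nb*(Q*X+Q) + 1"
  proof -
    have "(Q-1)*n = (Q-1)*(Nb*(Q*X+Q) + 1)"
    proof -
      have "(Q-1)*(Nb*(Q*X+Q) + 1) = (Nb*(Q-1))*(Q*X+Q) + Q - 1" by (simp add: algebra_simps)
      also have "\<dots> = (X-1)*(Q*X+Q) + Q - 1" by (simp only: Nb)
      also have "\<dots> = M" using MX by (simp add: algebra_simps power2_eq_square)
      finally show ?thesis using nM by (simp add: mult.commute)
    qed
    moreover have "Q - 1 \<noteq> 0" using Q by simp
    ultimately show ?thesis by (metis mult_left_cancel)
  qed
  have cop2: "coprime (X*Nb) n"
  proof -
    have "coprime X n"
    proof (rule coprime_lin[of _ "Q*X" _ "1-Q"])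
      have "n*(1-Q) = -M" using nM by (simp add: algebra_simps)
      then show "X*(Q*X) + n*(1-Q) = 1" using MX by (simp add: power2_eq_square algebra_simps)
    qed
    moreover have "coprime Nb n"
      by (rule coprime_lin[of _ "-(Q*X+Q)" _ "1"]) (simp add: nform algebra_simps)
    ultimately show ?thesis by simp
  qed
  have ES1: "n*S1 = X*Nb*R - Y*n*SJ + M*t - (Q-1)*Rn"
  proof -
    have "n*S1 = (\<Sum>r\<in>{0..<M}. (h r + t) - (X*Nb*(r mod n) + t) mod n)"
      unfolding S1_def sum_distrib_left
    proof (rule sum.cong)
      fix r
      have hh: "h r + t = (X*Nb*r + t) + n*(-(Y*J r))"
        unfolding h_def by (simp add: algebra_simps)
      have "(h r + t) mod n = (X*Nb*r + t) mod n" by (simp only: hh mod_mult_self2)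
      also have "\<dots> = (X*Nb*(r mod n) + t) mod n" by (metis mod_add_left_eq mod_mult_right_eq)
      finally show "n*U r = (h r + t) - (X*Nb*(r mod n) + t) mod n"
        unfolding U_def using div_mult_mod_eq[of "h r + t" n] by (simp add: algebra_simps)
    qed simp
    also have "\<dots> = (\<Sum>r\<in>{0..<M}. h r) + M*t - (\<Sum>r\<in>{0..<M}. (X*Nb*(r mod n) + t) mod n)"
      using M0 by (simp add: sum.distrib sum_subtractf)
    also have "(\<Sum>r\<in>{0..<M}. h r) = X*Nb*R - Y*n*SJ"
      unfolding h_def R_def SJ_def by (simp add: sum_subtractf sum_distrib_left)
    also have "(\<Sum>r\<in>{0..<M}. (X*Nb*(r mod n) + t) mod n) = (Q-1)*Rn"
    proof -
      have Meq: "M = int (nat (Q-1)) * n" using nM Q by (simp add: mult.commute)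
      have "(\<Sum>r\<in>{0..<M}. (X*Nb*(r mod n) + t) mod n) = int (nat (Q-1)) * (\<Sum>w\<in>{0..<n}. (X*Nb*w + t) mod n)"
        unfolding Meq by (rule periodic_sum[OF n0])
      also have "(\<Sum>w\<in>{0..<n}. (X*Nb*w + t) mod n) = Rn" unfolding Rn_def by (rule perm_sum[OF n0 cop2])
      finally show ?thesis using Q by simp
    qed
    finally show ?thesis .
  qed
  have cardS: "int (card Om) = S1 + v + M" using cardOm unfolding S1_def .
  have key: "(Q-1)*M*(2*(1 + Y*s + (Q-1)*t - S1 - M) - ((Q*X^2 - 2)*(X+Y-2) + (Q*X^2 - Q))) = 0"
    using ER ERn EJ ES1 nM Nb XY MX by algebra
  have "2*(1 + Y*s + (Q-1)*t - S1 - M) = (Q*X^2 - 2)*(X+Y-2) + (Q*X^2 - Q)"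
    using key Q M0 by simp
  then show ?thesis using cardS unfolding Om_def by simp
qed
theorem lemma3:
  fixes q b :: nat and v s t :: int
  assumes "prime_power q" and "b \<ge> 1"
    and "v \<ge> (int q ^ (2 * b + 1) - 1) * (int q ^ b + int q ^ (b - 1) - 1)"
    and "s \<ge> 0" and "t \<ge> 0"
  shows "int (card (Omega (int q) b v 0 s t))
           = 1 - genus (int q) b + v + int q ^ (b - 1) * s + (int q - 1) * t"
proof -
  obtain p k where pk: "prime p" "k \<ge> 1" "q = p ^ k" using assms(1) unfolding prime_power_def by blast
  have "p \<ge> 2" using pk(1) by (simp add: prime_ge_2_nat)
  moreover have "p \<le> p ^ k" using pk(2) \<open>p \<ge> 2\<close> by (simp add: self_le_power)
  ultimately have q2: "q \<ge> 2" using pk(3) by simp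
  define Q where "Q = int q"
  have Q: "Q \<ge> 2" unfolding Q_def using q2 by simp
  define X Y M n Nb where "X = Q^b" and "Y = Q^(b-1)" and "M = Q*X^2 - 1"
    and "n = NN Q (b+1+b)" and "Nb = NN Q b"
  have bb: "b = Suc (b-1)" using assms(2) by simp
  have XY: "X = Q*Y" unfolding X_def Y_def by (subst bb) simp
  have Y: "Y \<ge> 1" unfolding Y_def using Q by simp
  have Qc: "Q^(b+1+b) = Q*X^2" unfolding X_def by (simp add: power_add power2_eq_square algebra_simps)
  have Q2b: "Q^(2*b+1) = Q*X^2" unfolding X_def by (simp add: power_add power2_eq_square power_mult algebra_simps)
  have Qa: "Q^(b+1) = Q*X" unfolding X_def by simp
  have nM: "n*(Q-1) = M" unfolding n_def M_def using NN_mult[OF Q, of "b+1+b"] Qc by simp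
  have Nb: "Nb*(Q-1) = X - 1" unfolding Nb_def X_def using NN_mult[OF Q] by simp
  have vv: "(Q^(2*b+1) - 1)*(Q^b + Q^(b-1) - 1) = M*(X+Y-1)"
    by (simp only: Q2b flip: X_def Y_def M_def)
  have v: "v \<ge> M*(X+Y-1)" using assms(3) vv unfolding Q_def by simp
  note core = count_core[OF Q XY Y M_def nM Nb v assms(4) assms(5)]
  have Om: "Omega Q b v 0 s t = {(i,j,k). -v \<le> i \<and> 0 \<le> i + M*k \<and> i + M*k < M \<and>
            -s \<le> -(Q*X)*i + M*j \<and> -(Q*X)*i + M*j < M - s \<and>
            -t \<le> X*Nb*i - Y*n*j - (X-1)*n*k}"
  proof -
    have e1: "Q^(b+1+b) - 1 = M" unfolding M_def using Qc by simp
    have e2: "Q^(b+1-1) = X" unfolding X_def by simp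
    show ?thesis unfolding Omega_def Let_def
      by (simp only: e1 e2 Qa flip: Y_def n_def Nb_def) simp
  qed
  have g: "genus Q b = ((Q*X^2 - 2)*(X+Y-2) + (Q*X^2 - Q)) div 2"
  proof -
    have e2: "Q^(b+1-1) = X" unfolding X_def by simp
    show ?thesis unfolding genus_def Let_def by (simp only: e2 Qc flip: Y_def)
  qed
  show ?thesis using core unfolding Q_def[symmetric] Om[symmetric] g Y_def[symmetric] by simp
qed

end
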